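(* Let $n$ be a positive integer, $\mathbb T=(S^1)^n$, and let $\mathbb T'\subset\mathbb T$ be a subtorus. Let $\sigma_s\in\Omega^k(\mathbb T)$, $s<0$, be a family of exact smooth $\mathbb T'$-invariant $k$-forms, and assume there is $\delta>0$ such that $\sigma_s=O(e^{s\delta})$. Then there exists a family $\gamma_s\in\Omega^{k-1}(\mathbb T)$ of smooth $\mathbb T'$-invariant forms such that $d\gamma_s=\sigma_s$ and $\gamma_s=O(e^{s\delta})$.
   Context: Here a family of differential forms on $\mathbb T$ parametrized by $s\in(-\infty,0)$ is said to be $O(e^{s\delta})$ if, when written in the standard angle coordinates $\varphi_1,\dots,\varphi_n$ of $\mathbb T$ (as $\sum_J c_J\,d\varphi_J$), its coefficient functions $c_J$ are $O(e^{s\delta})$ as functions on $(-\infty,0)\times\mathbb T$, i.e. bounded by $Ce^{s\delta}$ for some constant $C$. $\mathbb T'$-invariance refers to invariance under translation by elements of $\mathbb T'$. *)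

theory Defs
  imports "HOL-Analysis.Analysis"
begin

text \<open>The torus T = (S^1)^n is modelled as R^n modulo (2 pi Z)^n, with the
index type 'n (CARD('n) = n) and angle coordinates x $ i.  A function on T is a
function on R^n that is 2 pi periodic in each coordinate.\<close>

definition torus_periodic :: "(real^'n \<Rightarrow> real) \<Rightarrow> bool" where
  "torus_periodic f \<longleftrightarrow> (\<forall>i x. f (x + (2 * pi) *\<^sub>R axis i 1) = f x)"

definition pd :: "'n \<Rightarrow> (real^'n \<Rightarrow> real) \<Rightarrow> real^'n \<Rightarrow> real" where
  "pd i f x = frechet_derivative f (at x) (axis i 1)"

definition iter_pd :: "'n list \<Rightarrow> (real^'n \<Rightarrow> real) \<Rightarrow> real^'n \<Rightarrow> real" where
  "iter_pd is f = foldr pd is f"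

definition smooth_fun :: "(real^'n \<Rightarrow> real) \<Rightarrow> bool" where
  "smooth_fun f \<longleftrightarrow> (\<forall>is. iter_pd is f differentiable_on UNIV)"

text \<open>A differential form is given by its alternating coefficient family:
  omega = sum over increasing J of (omega J) d phi_J, extended alternatingly to all
  index lists of length k, and zero on lists of other length.\<close>
definition smooth_kform :: "nat \<Rightarrow> ('n list \<Rightarrow> real^'n \<Rightarrow> real) \<Rightarrow> bool" where
  "smooth_kform k \<omega> \<longleftrightarrow>
     (\<forall>is. length is \<noteq> k \<longrightarrow> \<omega> is = (\<lambda>x. 0)) \<and>
     (\<forall>is i j. i < j \<and> j < length is \<longrightarrow>
        \<omega> (is[i := is ! j, j := is ! i]) = (\<lambda>x. - \<omega> is x)) \<and>
     (\<forall>is. smooth_fun (\<omega> is) \<and> torus_periodic (\<omega> is))"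

definition ext_d :: "('n list \<Rightarrow> real^'n \<Rightarrow> real) \<Rightarrow> 'n list \<Rightarrow> real^'n \<Rightarrow> real" where
  "ext_d \<omega> is x = (\<Sum>j<length is. (-1) ^ j * pd (is ! j) (\<omega> (take j is @ drop (Suc j) is)) x)"

definition exact_kform :: "nat \<Rightarrow> ('n list \<Rightarrow> real^'n \<Rightarrow> real) \<Rightarrow> bool" where
  "exact_kform k \<sigma> \<longleftrightarrow> smooth_kform k \<sigma> \<and> 1 \<le> k \<and>
     (\<exists>\<beta>. smooth_kform (k - 1) \<beta> \<and> ext_d \<beta> = \<sigma>)"

text \<open>A subtorus T' of T corresponds to a rational linear subspace V of R^n
  (spanned by integer vectors); T' is the image of V in T, and translation by
  elements of T' is x \<mapsto> x + v with v in V.\<close>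
definition subtorus_subspace :: "(real^'n) set \<Rightarrow> bool" where
  "subtorus_subspace V \<longleftrightarrow> (\<exists>B. (\<forall>b\<in>B. \<forall>i. b $ i \<in> \<int>) \<and> V = span B)"

definition invariant_under :: "(real^'n) set \<Rightarrow> ('n list \<Rightarrow> real^'n \<Rightarrow> real) \<Rightarrow> bool" where
  "invariant_under V \<omega> \<longleftrightarrow> (\<forall>v\<in>V. \<forall>is x. \<omega> is (x + v) = \<omega> is x)"

definition family_bigO :: "real \<Rightarrow> (real \<Rightarrow> 'n list \<Rightarrow> real^'n \<Rightarrow> real) \<Rightarrow> bool" where
  "family_bigO \<delta> \<omega> \<longleftrightarrow> (\<exists>C. \<forall>s<0. \<forall>is x. \<bar>\<omega> s is x\<bar> \<le> C * exp (s * \<delta>))"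

end

theory Submission
  imports Defs
begin

lemma pd_has_derivative: "(f has_derivative f') (at x) \<Longrightarrow> pd i f x = f' (axis i 1)"
  unfolding pd_def by (metis frechet_derivative_at)

lemma iter_pd_Nil[simp]: "iter_pd [] f = f" by (simp add: iter_pd_def)
lemma iter_pd_Cons[simp]: "iter_pd (i#is) f = pd i (iter_pd is f)" by (simp add: iter_pd_def)
lemma iter_pd_snoc: "iter_pd (is@[i]) f = iter_pd is (pd i f)" by (simp add: iter_pd_def)

lemma smooth_diff: "smooth_fun f \<Longrightarrow> f differentiable (at x)"
  unfolding smooth_fun_def differentiable_on_def
  by (metis iter_pd_Nil UNIV_I)

lemma smooth_iter_diff: "smooth_fun f \<Longrightarrow> iter_pd is f differentiable (at x)"
  unfolding smooth_fun_def differentiable_on_def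
  by (metis UNIV_I)

lemma smooth_pd: "smooth_fun f \<Longrightarrow> smooth_fun (pd i f)"
  unfolding smooth_fun_def by (metis iter_pd_snoc)

lemma smooth_iter: "smooth_fun f \<Longrightarrow> smooth_fun (iter_pd is f)"
  unfolding smooth_fun_def by (metis iter_pd_def foldr_append)

lemma pd_sum:
  fixes F :: "'b \<Rightarrow> real^'n \<Rightarrow> real"
  assumes "finite A" "\<And>j. j \<in> A \<Longrightarrow> F j differentiable (at x)"
  shows "pd i (\<lambda>y. \<Sum>j\<in>A. c j * F j y) x = (\<Sum>j\<in>A. c j * pd i (F j) x)"
proof -
  have "((\<lambda>y. \<Sum>j\<in>A. c j * F j y) has_derivative
        (\<lambda>h. \<Sum>j\<in>A. c j * frechet_derivative (F j) (at x) h)) (at x)"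
    using assms by (intro has_derivative_sum has_derivative_mult_right)
       (simp add: frechet_derivative_works[symmetric])
  then show ?thesis unfolding pd_def[of i "F _"] by (rule pd_has_derivative)
qed

lemma diff_cmult: fixes F :: "real^'n \<Rightarrow> real" shows "F differentiable (at x) \<Longrightarrow> (\<lambda>y. c * F y) differentiable (at x)"
proof -
  assume "F differentiable (at x)"
  then obtain D where "(F has_derivative D) (at x)" by (auto simp: differentiable_def)
  then have "((\<lambda>y. c * F y) has_derivative (\<lambda>h. c * D h)) (at x)" by (rule has_derivative_mult_right)
  then show ?thesis by (auto simp: differentiable_def)
qed

lemma pd_sum_diff:
  fixes F :: "'b \<Rightarrow> real^'n \<Rightarrow> real"
  assumes "finite A" "\<And>j. j \<in> A \<Longrightarrow> F j differentiable (at x)"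
  shows "(\<lambda>y. \<Sum>j\<in>A. c j * F j y) differentiable (at x)"
  by (rule differentiable_sum[OF assms(1)]) (use assms(2) diff_cmult in blast)

lemma iter_pd_sum:
  assumes "finite A" "\<And>j. j \<in> A \<Longrightarrow> smooth_fun (F j)"
  shows "iter_pd is (\<lambda>y. \<Sum>j\<in>A. c j * F j y) = (\<lambda>y. \<Sum>j\<in>A. c j * iter_pd is (F j) y)"
proof (induction "is")
  case Nil then show ?case by simp
next
  case (Cons i "is")
  show ?case
    by (simp add: Cons, rule ext, rule pd_sum[OF assms(1)], rule smooth_iter_diff[OF assms(2)])
qed

lemma smooth_sum:
  assumes "finite A" "\<And>j. j \<in> A \<Longrightarrow> smooth_fun (F j)"
  shows "smooth_fun (\<lambda>y. \<Sum>j\<in>A. c j * F j y)"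
proof -
  have "iter_pd is (\<lambda>y. \<Sum>j\<in>A. c j * F j y) = (\<lambda>y. \<Sum>j\<in>A. c j * iter_pd is (F j) y)" for "is"
    by (rule iter_pd_sum[OF assms])
  moreover have "(\<lambda>y. \<Sum>j\<in>A. c j * iter_pd is (F j) y) differentiable at x" for "is" x
    by (rule pd_sum_diff[OF assms(1)]) (rule smooth_iter_diff[OF assms(2)])
  ultimately show ?thesis unfolding smooth_fun_def differentiable_on_def by simp
qed

lemma pd_lin2:
  assumes "f differentiable (at x)" "g differentiable (at x)"
  shows "pd i (\<lambda>y. a * f y + b * g y) x = a * pd i f x + b * pd i g x"
proof -
  have "((\<lambda>y. a * f y + b * g y) has_derivative
        (\<lambda>h. a * frechet_derivative f (at x) h + b * frechet_derivative g (at x) h)) (at x)"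
    using assms by (intro has_derivative_add has_derivative_mult_right)
       (simp_all add: frechet_derivative_works[symmetric])
  from pd_has_derivative[OF this, of i] show ?thesis by (simp add: pd_def)
qed

lemma iter_pd_lin2:
  assumes "smooth_fun f" "smooth_fun g"
  shows "iter_pd is (\<lambda>y. a * f y + b * g y) = (\<lambda>y. a * iter_pd is f y + b * iter_pd is g y)"
proof (induction "is")
  case Nil then show ?case by simp
next
  case (Cons i "is")
  show ?case
    by (simp only: iter_pd_Cons Cons, rule ext, rule pd_lin2; rule smooth_iter_diff, rule assms)
qed

lemma smooth_lin2:
  assumes "smooth_fun f" "smooth_fun g"
  shows "smooth_fun (\<lambda>y. a * f y + b * g y)"
  unfolding smooth_fun_def differentiable_on_def
proof (intro allI ballI)
  fix "is" x
  show "iter_pd is (\<lambda>y. a * f y + b * g y) differentiable at x within UNIV"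
    unfolding iter_pd_lin2[OF assms]
    by (intro differentiable_add diff_cmult smooth_iter_diff assms)
qed

lemma smooth_add: "smooth_fun f \<Longrightarrow> smooth_fun g \<Longrightarrow> smooth_fun (\<lambda>y. f y + g y)"
  using smooth_lin2[of f g 1 1] by simp
lemma smooth_diffn: "smooth_fun f \<Longrightarrow> smooth_fun g \<Longrightarrow> smooth_fun (\<lambda>y. f y - g y)"
  using smooth_lin2[of f g 1 "-1"] by simp
lemma smooth_cmult: "smooth_fun f \<Longrightarrow> smooth_fun (\<lambda>y. a * f y)"
  using smooth_lin2[of f f a 0] by simp
lemma smooth_uminus: "smooth_fun f \<Longrightarrow> smooth_fun (\<lambda>y. - f y)"
  using smooth_lin2[of f f "-1" 0] by simp

lemma pd_const0[simp]: "pd i (\<lambda>y. 0) x = 0"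
  using pd_has_derivative[OF has_derivative_const[of 0 "at x"], of i] by simp

lemma smooth_const0: "smooth_fun ((\<lambda>y. 0) :: real^'n \<Rightarrow> real)"
proof -
  have "iter_pd is ((\<lambda>y. 0) :: real^'n \<Rightarrow> real) = (\<lambda>y. 0)" for "is"
    by (induction "is") (auto intro: ext)
  moreover have "((\<lambda>y. 0) :: real^'n \<Rightarrow> real) differentiable at x" for x by simp
  ultimately show ?thesis unfolding smooth_fun_def differentiable_on_def by simp
qed

definition tinv :: "real^'n \<Rightarrow> (real^'n \<Rightarrow> real) \<Rightarrow> bool" where
  "tinv v f \<longleftrightarrow> (\<forall>x. f (x + v) = f x)"

lemma tinv_pd:
  assumes "tinv v f" "\<And>x. f differentiable (at x)"
  shows "tinv v (pd i f)"
  unfolding tinv_def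
proof
  fix x
  have fe: "f = (\<lambda>y. f (y + v))" using assms(1) unfolding tinv_def by auto
  have "(f has_derivative frechet_derivative f (at (x+v))) (at (x + v))"
    using assms(2) frechet_derivative_works by blast
  moreover have "((\<lambda>y. y + v) has_derivative (\<lambda>h. h)) (at x)"
    by (intro derivative_eq_intros) auto
  ultimately have "((\<lambda>y. f (y + v)) has_derivative frechet_derivative f (at (x+v))) (at x)"
    using diff_chain_at[of "\<lambda>y. y + v" "\<lambda>h. h" x f] by (simp add: o_def)
  then have "(f has_derivative frechet_derivative f (at (x+v))) (at x)"
    using fe by simp
  then show "pd i f (x + v) = pd i f x"
    unfolding pd_def by (metis frechet_derivative_at)
qed

lemma torus_periodic_tinv: "torus_periodic f \<longleftrightarrow> (\<forall>i. tinv ((2*pi) *\<^sub>R axis i 1) f)"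
  unfolding torus_periodic_def tinv_def by blast

lemma invariant_under_tinv: "invariant_under V \<omega> \<longleftrightarrow> (\<forall>v\<in>V. \<forall>is. tinv v (\<omega> is))"
  unfolding invariant_under_def tinv_def by auto

lemma tinv_sum: "(\<And>j. j \<in> A \<Longrightarrow> tinv v (F j)) \<Longrightarrow> tinv v (\<lambda>y. \<Sum>j\<in>A. c j * F j y)"
  unfolding tinv_def by simp

definition conv :: "(real \<Rightarrow> real) \<Rightarrow> 'n \<Rightarrow> (real^'n \<Rightarrow> real) \<Rightarrow> real^'n \<Rightarrow> real" where
  "conv w i g x = integral (cbox 0 (2*pi)) (\<lambda>t. w t * g (x + t *\<^sub>R axis i 1))"

definition C1 :: "(real^'n \<Rightarrow> real) \<Rightarrow> bool" where
  "C1 g \<longleftrightarrow> (\<forall>x. g differentiable (at x)) \<and> (\<forall>j. continuous_on UNIV (pd j g))"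

definition grad :: "(real^'n \<Rightarrow> real) \<Rightarrow> real^'n \<Rightarrow> real^'n" where
  "grad g y = (\<chi> j. pd j g y)"

lemma smooth_cont: "smooth_fun g \<Longrightarrow> continuous_on UNIV g"
  unfolding smooth_fun_def by (metis iter_pd_Nil differentiable_imp_continuous_on)

lemma smooth_C1: "smooth_fun g \<Longrightarrow> C1 g"
  unfolding C1_def using smooth_diff smooth_pd smooth_cont by blast

lemma smooth_iter_C1: "smooth_fun g \<Longrightarrow> C1 (iter_pd is g)"
  using smooth_C1 smooth_iter by blast

lemma C1_cont: "C1 g \<Longrightarrow> continuous_on UNIV g"
  unfolding C1_def by (simp add: differentiable_imp_continuous_on differentiable_on_def)

lemma frechet_grad:
  assumes "g differentiable (at x)"
  shows "frechet_derivative g (at x) h = h \<bullet> grad g x"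
proof -
  let ?D = "frechet_derivative g (at x)"
  have lin: "linear ?D" using assms by (rule linear_frechet_derivative)
  have "?D h = ?D (\<Sum>j\<in>UNIV. h$j *\<^sub>R axis j 1)"
    using basis_expansion[of h] by (simp add: scalar_mult_eq_scaleR)
  also have "\<dots> = (\<Sum>j\<in>UNIV. h$j * ?D (axis j 1))"
    using lin by (simp add: linear_sum linear_scale o_def)
  also have "\<dots> = h \<bullet> grad g x" by (simp add: inner_vec_def grad_def pd_def)
  finally show ?thesis .
qed

lemma shift_deriv:
  assumes "(g has_derivative D) (at (x + v))"
  shows "((\<lambda>y. g (y + v)) has_derivative D) (at x)"
proof -
  have "((\<lambda>y. y + v) has_derivative (\<lambda>h. h)) (at x)"
    by (intro derivative_eq_intros) auto
  then show ?thesis using diff_chain_at[of "\<lambda>y. y + v" "\<lambda>h. h" x g D] assms by (simp add: o_def)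
qed

lemma pd_axis_grad: "axis j 1 \<bullet> grad g y = pd j g y"
  by (simp add: grad_def inner_axis')

lemma conv_has_derivative:
  fixes g :: "real^'n \<Rightarrow> real"
  assumes w: "continuous_on (cbox 0 (2*pi)) w" and g: "C1 g"
  shows "(conv w i g has_derivative
          (\<lambda>h. integral (cbox 0 (2*pi)) (\<lambda>t. w t * (h \<bullet> grad g (x + t *\<^sub>R axis i 1))))) (at x)"
proof -
  define fx where "fx = (\<lambda>(x::real^'n) (t::real). w t *\<^sub>R blinfun_inner_left (grad g (x + t *\<^sub>R axis i 1)))"
  define f where "f = (\<lambda>(x::real^'n) (t::real). w t * g (x + t *\<^sub>R axis i 1))"
  have gd: "\<And>y. g differentiable (at y)" using g C1_def by blast
  have cg: "continuous_on UNIV (grad g)" unfolding grad_def using g C1_def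
    by (auto intro!: continuous_on_vec_lambda)
  have cgd: "continuous_on UNIV g" using g by (rule C1_cont)
  have D: "((\<lambda>x. f x t) has_derivative blinfun_apply (fx x t)) (at x within UNIV)" for x t
  proof -
    have "(g has_derivative frechet_derivative g (at (x + t *\<^sub>R axis i 1))) (at (x + t *\<^sub>R axis i 1))"
      using gd frechet_derivative_works by blast
    then have "((\<lambda>x. g (x + t *\<^sub>R axis i 1)) has_derivative frechet_derivative g (at (x + t *\<^sub>R axis i 1))) (at x)"
      by (rule shift_deriv)
    then have "((\<lambda>x. w t * g (x + t *\<^sub>R axis i 1)) has_derivative
       (\<lambda>h. w t * frechet_derivative g (at (x + t *\<^sub>R axis i 1)) h)) (at x)"
      by (rule has_derivative_mult_right)
    then show ?thesis
      unfolding f_def fx_def using frechet_grad[OF gd]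
      by (simp add: inner_commute scaleR_blinfun.rep_eq)
  qed
  have cw: "continuous_on (UNIV \<times> cbox 0 (2*pi)) (\<lambda>p::(real^'n) \<times> real. w (snd p))"
    by (rule continuous_on_compose2[OF w continuous_on_snd]) auto
  have cgr: "continuous_on (UNIV \<times> cbox 0 (2*pi)) (\<lambda>p::(real^'n) \<times> real. grad g (fst p + snd p *\<^sub>R axis i 1))"
    by (rule continuous_on_compose2[OF cg]) (auto intro!: continuous_intros)
  have cfx: "continuous_on (UNIV \<times> cbox 0 (2*pi)) (\<lambda>(x, t). fx x t)"
    unfolding fx_def split_def
    by (intro continuous_on_scaleR cw bounded_linear.continuous_on[OF bounded_linear_blinfun_inner_left] cgr)
  have cf: "continuous_on (cbox 0 (2*pi)) (f x)" for x
    unfolding f_def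
    by (intro continuous_on_mult w continuous_on_compose2[OF cgd]) (auto intro!: continuous_intros)
  have intf: "f x integrable_on cbox 0 (2*pi)" for x using cf by (rule integrable_continuous)
  have intfx: "fx x integrable_on cbox 0 (2*pi)" for x
  proof -
    have "continuous_on (cbox 0 (2*pi)) (\<lambda>t. (\<lambda>(x, t). fx x t) (x, t))"
      by (rule continuous_on_compose2[OF cfx]) (auto intro!: continuous_intros)
    then show ?thesis using integrable_continuous[of 0 "2*pi" "fx x"] by simp
  qed
  have L: "((\<lambda>x. integral (cbox 0 (2*pi)) (f x)) has_derivative integral (cbox 0 (2*pi)) (fx x)) (at x within UNIV)"
    by (rule leibniz_rule[OF D intf cfx]) auto
  have E: "blinfun_apply (integral (cbox 0 (2*pi)) (fx x)) =
     (\<lambda>h. integral (cbox 0 (2*pi)) (\<lambda>t. w t * (h \<bullet> grad g (x + t *\<^sub>R axis i 1))))"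
    by (rule ext, subst blinfun_apply_integral[OF intfx]) (simp add: fx_def scaleR_blinfun.rep_eq)
  have "conv w i g = (\<lambda>x. integral (cbox 0 (2*pi)) (f x))"
    by (rule ext) (simp add: conv_def f_def)
  then show ?thesis using L E by simp
qed

lemma conv_diff:
  "continuous_on (cbox 0 (2*pi)) w \<Longrightarrow> C1 g \<Longrightarrow> conv w i g differentiable (at x)"
  using conv_has_derivative differentiable_def by blast

lemma conv_pd:
  assumes "continuous_on (cbox 0 (2*pi)) w" "C1 g"
  shows "pd j (conv w i g) x = conv w i (pd j g) x"
  using pd_has_derivative[OF conv_has_derivative[OF assms, of i x], of j]
  by (simp add: pd_axis_grad conv_def)

lemma iter_pd_conv:
  assumes "continuous_on (cbox 0 (2*pi)) w" "smooth_fun g"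
  shows "iter_pd is (conv w i g) = conv w i (iter_pd is g)"
proof (induction "is")
  case Nil then show ?case by simp
next
  case (Cons j "is")
  show ?case by (simp only: iter_pd_Cons Cons, rule ext, rule conv_pd[OF assms(1) smooth_iter_C1[OF assms(2)]])
qed

lemma smooth_conv:
  assumes "continuous_on (cbox 0 (2*pi)) w" "smooth_fun g"
  shows "smooth_fun (conv w i g)"
  unfolding smooth_fun_def differentiable_on_def iter_pd_conv[OF assms]
  using conv_diff[OF assms(1) smooth_iter_C1[OF assms(2)]] by blast

lemma tinv_conv: "tinv v g \<Longrightarrow> tinv v (conv w i g)"
  unfolding tinv_def conv_def
proof
  fix x assume H: "\<forall>x. g (x + v) = g x"
  have "g (x + v + t *\<^sub>R axis i 1) = g (x + t *\<^sub>R axis i 1)" for t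
  proof -
    have "g (x + v + t *\<^sub>R axis i 1) = g ((x + t *\<^sub>R axis i 1) + v)"
      by (simp add: algebra_simps)
    also have "\<dots> = g (x + t *\<^sub>R axis i 1)" using H by blast
    finally show ?thesis .
  qed
  then show "integral (cbox 0 (2 * pi)) (\<lambda>t. w t * g (x + v + t *\<^sub>R axis i 1)) =
         integral (cbox 0 (2 * pi)) (\<lambda>t. w t * g (x + t *\<^sub>R axis i 1))" by simp
qed

lemma conv_integrable:
  fixes g :: "real^'n \<Rightarrow> real"
  assumes "continuous_on (cbox 0 (2*pi)) w" "continuous_on UNIV g"
  shows "(\<lambda>t. w t * g (x + t *\<^sub>R axis i 1)) integrable_on cbox 0 (2*pi)"
proof -
  have "continuous_on (cbox 0 (2*pi)) (\<lambda>t. g (x + t *\<^sub>R axis i 1))"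
    by (rule continuous_on_compose2[OF assms(2)]) (auto intro!: continuous_intros)
  then show ?thesis by (intro integrable_continuous continuous_on_mult assms(1))
qed

lemma conv_sum:
  fixes F :: "'b \<Rightarrow> real^'n \<Rightarrow> real"
  assumes "continuous_on (cbox 0 (2*pi)) w" "finite A" "\<And>j. j \<in> A \<Longrightarrow> continuous_on UNIV (F j)"
  shows "conv w i (\<lambda>y. \<Sum>j\<in>A. c j * F j y) x = (\<Sum>j\<in>A. c j * conv w i (F j) x)"
proof -
  have "conv w i (\<lambda>y. \<Sum>j\<in>A. c j * F j y) x =
     integral (cbox 0 (2*pi)) (\<lambda>t. \<Sum>j\<in>A. c j * (w t * F j (x + t *\<^sub>R axis i 1)))"
    unfolding conv_def by (simp add: sum_distrib_left mult.left_commute)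
  also have "\<dots> = (\<Sum>j\<in>A. integral (cbox 0 (2*pi)) (\<lambda>t. c j * (w t * F j (x + t *\<^sub>R axis i 1))))"
  proof (rule integral_sum[OF assms(2)])
    fix j assume "j \<in> A"
    then have "(\<lambda>t. w t * F j (x + t *\<^sub>R axis i 1)) integrable_on cbox 0 (2*pi)"
      by (intro conv_integrable assms(1) assms(3))
    from integrable_on_cmult_left[OF this, of "c j"]
    show "(\<lambda>t. c j * (w t * F j (x + t *\<^sub>R axis i 1))) integrable_on cbox 0 (2*pi)"
      by simp
  qed
  also have "\<dots> = (\<Sum>j\<in>A. c j * conv w i (F j) x)"
    unfolding conv_def by simp
  finally show ?thesis .
qed

lemma conv_diff2:
  fixes f g :: "real^'n \<Rightarrow> real"
  assumes "continuous_on (cbox 0 (2*pi)) w" "continuous_on UNIV f" "continuous_on UNIV g"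
  shows "conv w i (\<lambda>y. f y - g y) x = conv w i f x - conv w i g x"
  unfolding conv_def
  using integral_diff[OF conv_integrable[OF assms(1,2)] conv_integrable[OF assms(1,3)]]
  by (simp add: right_diff_distrib)

lemma conv_zero[simp]: "conv w i (\<lambda>y. 0) x = 0"
  by (simp add: conv_def)

lemma conv_uminus: "conv w i (\<lambda>y. - g y) x = - conv w i g x"
  unfolding conv_def by (simp only: mult_minus_right integral_neg)

lemma conv_bound:
  fixes g :: "real^'n \<Rightarrow> real"
  assumes "continuous_on (cbox 0 (2*pi)) w" "continuous_on UNIV g"
    "\<And>t. t \<in> cbox 0 (2*pi) \<Longrightarrow> \<bar>w t\<bar> \<le> M" "\<And>y. \<bar>g y\<bar> \<le> B"
  shows "\<bar>conv w i g x\<bar> \<le> 2 * pi * (M * B)"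
proof -
  have "norm (conv w i g x) \<le> integral (cbox 0 (2*pi)) (\<lambda>t. M * B)"
    unfolding conv_def
  proof (rule integral_norm_bound_integral[OF conv_integrable[OF assms(1,2)]])
    show "(\<lambda>t. M * B) integrable_on cbox 0 (2 * pi)" by (rule integrable_const)
    fix t assume "t \<in> cbox 0 (2*pi)"
    then show "norm (w t * g (x + t *\<^sub>R axis i 1)) \<le> M * B"
      using assms(3,4) by (simp add: abs_mult mult_mono')
  qed
  moreover have "integral (cbox 0 (2*pi)) (\<lambda>t. M * B) = 2 * pi * (M * B)"
    by (simp add: cbox_interval)
  ultimately have "\<bar>conv w i g x\<bar> \<le> M * (2 * pi * B)" by simp
  then show ?thesis by (metis mult.left_commute)
qed

lemma line_deriv:
  fixes g :: "real^'n \<Rightarrow> real"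
  assumes "\<And>y. g differentiable (at y)"
  shows "((\<lambda>t. g (x + t *\<^sub>R axis i 1)) has_real_derivative pd i g (x + t *\<^sub>R axis i 1)) (at t within S)"
proof -
  let ?y = "x + t *\<^sub>R axis i 1"
  let ?D = "frechet_derivative g (at ?y)"
  have g: "(g has_derivative ?D) (at ?y)" using assms frechet_derivative_works by blast
  have l: "((\<lambda>t. x + t *\<^sub>R axis i 1) has_derivative (\<lambda>s. s *\<^sub>R axis i 1)) (at t)"
    by (intro derivative_eq_intros) auto
  have "((g \<circ> (\<lambda>t. x + t *\<^sub>R axis i 1)) has_derivative (?D \<circ> (\<lambda>s. s *\<^sub>R axis i 1))) (at t)"
    by (rule diff_chain_at[OF l]) (simp add: g)
  moreover have "(?D \<circ> (\<lambda>s. s *\<^sub>R axis i 1)) = (\<lambda>s. pd i g ?y * s)"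
    using linear_frechet_derivative[OF assms[of ?y]]
    by (auto simp: o_def pd_def linear_scale)
  ultimately have "((\<lambda>t. g (x + t *\<^sub>R axis i 1)) has_real_derivative pd i g ?y) (at t)"
    by (simp add: has_field_derivative_def o_def)
  then show ?thesis by (rule has_field_derivative_at_within)
qed

lemma line_cont:
  fixes g :: "real^'n \<Rightarrow> real"
  assumes "continuous_on UNIV g"
  shows "continuous_on S (\<lambda>t. g (x + t *\<^sub>R axis i 1))"
  by (rule continuous_on_compose2[OF assms]) (auto intro!: continuous_intros)

lemma ftc_line:
  fixes g :: "real^'n \<Rightarrow> real"
  assumes "\<And>y. g differentiable (at y)" "continuous_on UNIV (pd i g)" "a \<le> b"
  shows "((\<lambda>t. pd i g (x + t *\<^sub>R axis i 1)) has_integral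
          (g (x + b *\<^sub>R axis i 1) - g (x + a *\<^sub>R axis i 1))) {a..b}"
  by (rule fundamental_theorem_of_calculus[OF assms(3)])
     (simp add: has_real_derivative_iff_has_vector_derivative[symmetric] line_deriv[OF assms(1)])

definition avg :: "'n \<Rightarrow> (real^'n \<Rightarrow> real) \<Rightarrow> real^'n \<Rightarrow> real" where
  "avg i g = conv (\<lambda>t. 1 / (2*pi)) i g"

definition prim :: "'n \<Rightarrow> (real^'n \<Rightarrow> real) \<Rightarrow> real^'n \<Rightarrow> real" where
  "prim i g = conv (\<lambda>t. t / (2*pi)) i g"

lemma cont_avgw: "continuous_on (cbox 0 (2*pi)) (\<lambda>t::real. 1 / (2*pi))" by simp
lemma cont_primw: "continuous_on (cbox 0 (2*pi)) (\<lambda>t::real. t / (2*pi))"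
  by (intro continuous_intros) auto

lemma avg_pd_zero:
  fixes g :: "real^'n \<Rightarrow> real"
  assumes "C1 g" "tinv ((2*pi) *\<^sub>R axis i 1) g"
  shows "avg i (pd i g) x = 0"
proof -
  have "((\<lambda>t. pd i g (x + t *\<^sub>R axis i 1)) has_integral
          (g (x + (2*pi) *\<^sub>R axis i 1) - g (x + 0 *\<^sub>R axis i 1))) {0..2*pi}"
    using assms(1) unfolding C1_def by (intro ftc_line) auto
  then have "integral {0..2*pi} (\<lambda>t. pd i g (x + t *\<^sub>R axis i 1)) = 0"
    using assms(2) unfolding tinv_def by (simp add: integral_unique)
  then show ?thesis unfolding avg_def conv_def cbox_interval by simp
qed

lemma prim_pd:
  fixes g :: "real^'n \<Rightarrow> real"
  assumes "C1 g" "tinv ((2*pi) *\<^sub>R axis i 1) g"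
  shows "prim i (pd i g) x = g x - avg i g x"
proof -
  have gd: "\<And>y. g differentiable (at y)" and cp: "continuous_on UNIV (pd i g)"
    using assms(1) unfolding C1_def by auto
  have cg: "continuous_on UNIV g" using assms(1) by (rule C1_cont)
  have D: "((\<lambda>t. t * g (x + t *\<^sub>R axis i 1)) has_vector_derivative
           (t * pd i g (x + t *\<^sub>R axis i 1) + g (x + t *\<^sub>R axis i 1))) (at t within {0..2*pi})" for t
  proof -
    have "((\<lambda>t. t * g (x + t *\<^sub>R axis i 1)) has_real_derivative
           (t * pd i g (x + t *\<^sub>R axis i 1) + 1 * g (x + t *\<^sub>R axis i 1))) (at t within {0..2*pi})"
      by (rule DERIV_mult'[OF DERIV_ident line_deriv[OF gd]])
    then show ?thesis by (simp add: has_real_derivative_iff_has_vector_derivative)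
  qed
  have "((\<lambda>t. t * pd i g (x + t *\<^sub>R axis i 1) + g (x + t *\<^sub>R axis i 1)) has_integral
         (2*pi * g (x + (2*pi) *\<^sub>R axis i 1) - 0 * g (x + 0 *\<^sub>R axis i 1))) {0..2*pi}"
    by (rule fundamental_theorem_of_calculus) (use D in auto)
  then have I: "integral {0..2*pi} (\<lambda>t. t * pd i g (x + t *\<^sub>R axis i 1) + g (x + t *\<^sub>R axis i 1)) = 2*pi * g x"
    using assms(2) unfolding tinv_def by (simp add: integral_unique)
  have i1: "(\<lambda>t. g (x + t *\<^sub>R axis i 1)) integrable_on {0..2*pi}"
    by (intro integrable_continuous_interval line_cont cg)
  have i2: "(\<lambda>t. t * pd i g (x + t *\<^sub>R axis i 1)) integrable_on {0..2*pi}"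
    by (intro integrable_continuous_interval continuous_intros line_cont cp)
  have I2: "integral {0..2*pi} (\<lambda>t. g (x + t *\<^sub>R axis i 1)) + integral {0..2*pi} (\<lambda>t. t * pd i g (x + t *\<^sub>R axis i 1)) = 2*pi*g x"
    using I integral_add[OF i2 i1] by simp
  have e1: "prim i (pd i g) x = (1/(2*pi)) * integral {0..2*pi} (\<lambda>t. t * pd i g (x + t *\<^sub>R axis i 1))"
    unfolding prim_def conv_def cbox_interval by (simp add: integral_mult_right[symmetric] del: integral_mult_right)
  have e2: "avg i g x = (1/(2*pi)) * integral {0..2*pi} (\<lambda>t. g (x + t *\<^sub>R axis i 1))"
    unfolding avg_def conv_def cbox_interval by simp
  have "avg i g x + prim i (pd i g) x = (1/(2*pi)) * (integral {0..2*pi} (\<lambda>t. g (x + t *\<^sub>R axis i 1)) + integral {0..2*pi} (\<lambda>t. t * pd i g (x + t *\<^sub>R axis i 1)))"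
    unfolding e1 e2 by (simp only: distrib_left)
  also have "\<dots> = g x" unfolding I2 by simp
  finally show ?thesis by linarith
qed

lemma pd_sym:
  fixes f :: "real^'n \<Rightarrow> real"
  assumes f: "smooth_fun f"
  shows "pd a (pd b f) x = pd b (pd a f) x"
proof -
  define ea where "ea = (axis a 1 :: real^'n)"
  define eb where "eb = (axis b 1 :: real^'n)"
  define P where "P = pd b f"
  define Q where "Q = pd a f"
  define R where "R = pd a P"
  define S where "S = pd b Q"
  have sm: "smooth_fun P" "smooth_fun Q" "smooth_fun R" "smooth_fun S"
    using f smooth_pd unfolding P_def Q_def R_def S_def by blast+
  have fd: "\<And>y. f differentiable at y" using f smooth_diff by blast
  have Pd: "\<And>y. P differentiable at y" and Qd: "\<And>y. Q differentiable at y"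
    using sm smooth_diff by blast+
  have Pc: "continuous_on UNIV P" and Rc: "continuous_on UNIV R" using sm smooth_cont by blast+
  have S1: "integral {-1..t} (\<lambda>r. P ((x + s *\<^sub>R ea) + r *\<^sub>R eb)) =
      f ((x + s *\<^sub>R ea) + t *\<^sub>R eb) - f ((x + s *\<^sub>R ea) + (-1) *\<^sub>R eb)" if "-1 \<le> t" for s t
    using ftc_line[OF fd _ that, of b "x + s *\<^sub>R ea"] Pc unfolding P_def eb_def
    by (simp add: integral_unique)
  have S2: "integral {-1..t} (\<lambda>r. R (x + r *\<^sub>R eb)) = Q (x + t *\<^sub>R eb) - Q (x + (-1) *\<^sub>R eb)"
    if "-1 \<le> t" for t
  proof -
    define F where "F = (\<lambda>s r. P ((x + r *\<^sub>R eb) + s *\<^sub>R ea))"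
    have dF: "((\<lambda>s. F s r) has_field_derivative R ((x + r *\<^sub>R eb) + s *\<^sub>R ea)) (at s within UNIV)" for s r
      unfolding F_def R_def ea_def by (rule line_deriv[OF Pd])
    have cR: "continuous_on (UNIV \<times> cbox (-1) t) (\<lambda>(s, r). R ((x + r *\<^sub>R eb) + s *\<^sub>R ea))"
      unfolding split_def by (rule continuous_on_compose2[OF Rc]) (auto intro!: continuous_intros)
    have iF: "F s integrable_on cbox (-1) t" for s
    proof -
      have "continuous_on (cbox (-1) t) (F s)"
        unfolding F_def by (rule continuous_on_compose2[OF Pc]) (auto intro!: continuous_intros)
      then show ?thesis by (rule integrable_continuous)
    qed
    have L: "((\<lambda>s. integral (cbox (-1) t) (F s)) has_field_derivative
        integral (cbox (-1) t) (\<lambda>r. R ((x + r *\<^sub>R eb) + 0 *\<^sub>R ea))) (at 0 within UNIV)"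
      by (rule leibniz_rule_field_derivative[OF dF iF cR]) auto
    have eqf: "(\<lambda>s. integral (cbox (-1) t) (F s)) =
       (\<lambda>s. f ((x + t *\<^sub>R eb) + s *\<^sub>R ea) - f ((x + (-1) *\<^sub>R eb) + s *\<^sub>R ea))"
    proof
      fix s
      have "F s = (\<lambda>r. P ((x + s *\<^sub>R ea) + r *\<^sub>R eb))"
        unfolding F_def by (simp add: algebra_simps)
      then show "integral (cbox (-1) t) (F s) =
          f ((x + t *\<^sub>R eb) + s *\<^sub>R ea) - f ((x + (-1) *\<^sub>R eb) + s *\<^sub>R ea)"
        using S1[OF that, of s] unfolding cbox_interval by (simp add: algebra_simps)
    qed
    have R2: "((\<lambda>s. f ((x + t *\<^sub>R eb) + s *\<^sub>R ea) - f ((x + (-1) *\<^sub>R eb) + s *\<^sub>R ea)) has_field_derivative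
        (Q ((x + t *\<^sub>R eb) + 0 *\<^sub>R ea) - Q ((x + (-1) *\<^sub>R eb) + 0 *\<^sub>R ea))) (at 0)"
      unfolding Q_def ea_def by (intro DERIV_diff line_deriv[OF fd])
    have "integral (cbox (-1) t) (\<lambda>r. R ((x + r *\<^sub>R eb) + 0 *\<^sub>R ea)) =
        Q ((x + t *\<^sub>R eb) + 0 *\<^sub>R ea) - Q ((x + (-1) *\<^sub>R eb) + 0 *\<^sub>R ea)"
      using DERIV_unique[OF L[unfolded eqf] R2] by simp
    then show ?thesis by (simp add: cbox_interval)
  qed
  have cR1: "continuous_on {-1..1} (\<lambda>r. R (x + r *\<^sub>R eb))"
    unfolding eb_def by (rule line_cont[OF Rc])
  have D1: "((\<lambda>t. integral {-1..t} (\<lambda>r. R (x + r *\<^sub>R eb))) has_vector_derivative R x)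
      (at 0 within {-1..1})"
    using integral_has_vector_derivative[OF cR1, of 0] by simp
  have D2: "((\<lambda>t. Q (x + t *\<^sub>R eb) - Q (x + (-1) *\<^sub>R eb)) has_vector_derivative R x) (at 0 within {-1..1})"
    by (rule has_vector_derivative_transform_within[OF D1, of 1]) (auto simp: S2)
  have "interior {-1..1::real} = {-1<..<1}" by simp
  then have "at (0::real) within {-1..1} = at 0" by (intro at_within_interior) auto
  then have D2': "((\<lambda>t. Q (x + t *\<^sub>R eb) - Q (x + (-1) *\<^sub>R eb)) has_field_derivative R x) (at 0)"
    using D2 by (simp add: has_real_derivative_iff_has_vector_derivative)
  have D3: "((\<lambda>t. Q (x + t *\<^sub>R eb) - Q (x + (-1) *\<^sub>R eb)) has_field_derivative S x) (at 0)"
    using DERIV_diff[OF line_deriv[OF Qd, of x b 0 UNIV] DERIV_const] unfolding S_def eb_def by simp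
  show ?thesis using DERIV_unique[OF D2' D3] unfolding R_def S_def P_def Q_def .
qed

definition smf :: "('n list \<Rightarrow> real^'n \<Rightarrow> real) \<Rightarrow> bool" where
  "smf \<omega> \<longleftrightarrow> (\<forall>is. smooth_fun (\<omega> is))"

definition perf :: "('n list \<Rightarrow> real^'n \<Rightarrow> real) \<Rightarrow> bool" where
  "perf \<omega> \<longleftrightarrow> (\<forall>is i. tinv ((2*pi) *\<^sub>R axis i 1) (\<omega> is))"

definition iota :: "'n \<Rightarrow> ('n list \<Rightarrow> real^'n \<Rightarrow> real) \<Rightarrow> 'n list \<Rightarrow> real^'n \<Rightarrow> real" where
  "iota a \<omega> = (\<lambda>is. \<omega> (a # is))"

lemma ext_d_eq:
  "ext_d \<omega> is = (\<lambda>x. \<Sum>j<length is. (-1)^j * pd (is!j) (\<omega> (take j is @ drop (Suc j) is)) x)"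
  by (rule ext) (simp add: ext_d_def)

lemma smooth_ext_d:
  assumes "smf \<omega>" shows "smooth_fun (ext_d \<omega> is)"
  unfolding ext_d_eq
  by (rule smooth_sum[where c="\<lambda>j. (-1)^j" and F="\<lambda>j. pd (is!j) (\<omega> (take j is @ drop (Suc j) is))"])
     (use assms smooth_pd in \<open>auto simp: smf_def\<close>)

lemma smf_ext_d: "smf \<omega> \<Longrightarrow> smf (ext_d \<omega>)"
  using smooth_ext_d unfolding smf_def by blast

lemma tinv_ext_d:
  assumes "smf \<omega>" "\<And>is. tinv v (\<omega> is)"
  shows "tinv v (ext_d \<omega> is)"
  unfolding ext_d_eq
  by (rule tinv_sum[where c="\<lambda>j. (-1)^j" and F="\<lambda>j. pd (is!j) (\<omega> (take j is @ drop (Suc j) is))"])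
     (use assms in \<open>auto simp: smf_def intro!: tinv_pd smooth_diff\<close>)

lemma perf_ext_d: "smf \<omega> \<Longrightarrow> perf \<omega> \<Longrightarrow> perf (ext_d \<omega>)"
  unfolding perf_def using tinv_ext_d by blast

lemma smf_iota: "smf \<omega> \<Longrightarrow> smf (iota a \<omega>)"
  unfolding smf_def iota_def by blast

lemma cartan: "ext_d (iota a \<omega>) is x + ext_d \<omega> (a # is) x = pd a (\<omega> is) x"
proof -
  let ?F = "\<lambda>j. pd (is!j) (\<omega> (a # (take j is @ drop (Suc j) is))) x"
  have "ext_d \<omega> (a # is) x = pd a (\<omega> is) x + (\<Sum>j<length is. (-1)^(Suc j) * ?F j)"
    unfolding ext_d_def by (simp only: length_Cons sum.lessThan_Suc_shift) simp
  moreover have "ext_d (iota a \<omega>) is x = (\<Sum>j<length is. (-1)^j * ?F j)"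
    unfolding ext_d_def iota_def by simp
  moreover have "(\<Sum>j<length is. (-1)^(Suc j) * ?F j) = - (\<Sum>j<length is. (-1)^j * ?F j)"
    by (simp add: sum_negf[symmetric])
  ultimately show ?thesis by linarith
qed

lemma pd_minus2:
  assumes "f differentiable (at x)" "g differentiable (at x)"
  shows "pd i (\<lambda>y. f y - g y) x = pd i f x - pd i g x"
  using pd_lin2[OF assms, of i 1 "-1"] by simp

lemma pd_plus2:
  assumes "f differentiable (at x)" "g differentiable (at x)"
  shows "pd i (\<lambda>y. f y + g y) x = pd i f x + pd i g x"
  using pd_lin2[OF assms, of i 1 1] by simp

lemma ext_d_diff:
  assumes "\<And>is y. f is differentiable (at y)" "\<And>is y. g is differentiable (at y)"
  shows "ext_d (\<lambda>is y. f is y - g is y) is x = ext_d f is x - ext_d g is x"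
  unfolding ext_d_def by (simp add: pd_minus2 assms right_diff_distrib sum_subtractf)

lemma ext_d_add:
  assumes "\<And>is y. f is differentiable (at y)" "\<And>is y. g is differentiable (at y)"
  shows "ext_d (\<lambda>is y. f is y + g is y) is x = ext_d f is x + ext_d g is x"
  unfolding ext_d_def by (simp add: pd_plus2 assms distrib_left sum.distrib)

lemma pd_ext_d:
  assumes "smf \<omega>"
  shows "pd a (ext_d \<omega> is) x = ext_d (\<lambda>is. pd a (\<omega> is)) is x"
proof -
  have sm: "\<And>is. smooth_fun (\<omega> is)" using assms smf_def by blast
  have "pd a (ext_d \<omega> is) x =
     (\<Sum>j<length is. (-1)^j * pd a (pd (is!j) (\<omega> (take j is @ drop (Suc j) is))) x)"
    unfolding ext_d_eq
    by (rule pd_sum[where c="\<lambda>j. (-1)^j" and F="\<lambda>j. pd (is!j) (\<omega> (take j is @ drop (Suc j) is))"])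
       (auto intro!: smooth_diff smooth_pd sm)
  also have "\<dots> = ext_d (\<lambda>is. pd a (\<omega> is)) is x"
    unfolding ext_d_def using pd_sym[OF sm] by simp
  finally show ?thesis .
qed

lemma dd_zero:
  assumes "smf \<omega>"
  shows "ext_d (ext_d \<omega>) is x = 0"
  using assms
proof (induction "is" arbitrary: \<omega> x)
  case Nil
  then show ?case by (simp add: ext_d_def)
next
  case (Cons a "is")
  have sm: "\<And>is. smooth_fun (\<omega> is)" using Cons.prems smf_def by blast
  have c1: "ext_d (ext_d \<omega>) (a # is) x = pd a (ext_d \<omega> is) x - ext_d (iota a (ext_d \<omega>)) is x"
    using cartan[of a "ext_d \<omega>" "is" x] by simp
  have c2: "iota a (ext_d \<omega>) = (\<lambda>is y. pd a (\<omega> is) y - ext_d (iota a \<omega>) is y)"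
    using cartan[of a \<omega>] by (auto simp: iota_def fun_eq_iff algebra_simps)
  have s2: "smf (iota a \<omega>)" using Cons.prems by (rule smf_iota)
  have c3: "ext_d (iota a (ext_d \<omega>)) is x =
      ext_d (\<lambda>is. pd a (\<omega> is)) is x - ext_d (ext_d (iota a \<omega>)) is x"
    unfolding c2
    by (rule ext_d_diff[where f="\<lambda>is. pd a (\<omega> is)" and g="ext_d (iota a \<omega>)"])
       (auto intro!: smooth_diff smooth_pd sm smooth_ext_d s2)
  have ih: "ext_d (ext_d (iota a \<omega>)) is x = 0" using Cons.IH[OF s2] .
  show ?case using c1 c3 ih pd_ext_d[OF Cons.prems, of a "is" x] by simp
qed

lemma conv_ext_d:
  assumes w: "continuous_on (cbox 0 (2*pi)) w" and "smf \<omega>"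
  shows "ext_d (\<lambda>is. conv w i (\<omega> is)) is x = conv w i (ext_d \<omega> is) x"
proof -
  have sm: "\<And>is. smooth_fun (\<omega> is)" using assms smf_def by blast
  have "ext_d (\<lambda>is. conv w i (\<omega> is)) is x =
      (\<Sum>j<length is. (-1)^j * conv w i (pd (is!j) (\<omega> (take j is @ drop (Suc j) is))) x)"
    unfolding ext_d_def using conv_pd[OF w smooth_C1[OF sm]] by simp
  also have "\<dots> = conv w i (ext_d \<omega> is) x"
    unfolding ext_d_eq
    by (rule conv_sum[where c="\<lambda>j. (-1)^j" and F="\<lambda>j. pd (is!j) (\<omega> (take j is @ drop (Suc j) is))", symmetric])
       (use w in \<open>auto intro!: smooth_cont smooth_pd sm simp: cbox_interval\<close>)
  finally show ?thesis .
qed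

lemma smooth_avg: "smooth_fun g \<Longrightarrow> smooth_fun (avg i g)"
  unfolding avg_def by (rule smooth_conv[OF cont_avgw])
lemma smooth_prim: "smooth_fun g \<Longrightarrow> smooth_fun (prim i g)"
  unfolding prim_def by (rule smooth_conv[OF cont_primw])
lemma tinv_avg: "tinv v g \<Longrightarrow> tinv v (avg i g)"
  unfolding avg_def by (rule tinv_conv)
lemma tinv_prim: "tinv v g \<Longrightarrow> tinv v (prim i g)"
  unfolding prim_def by (rule tinv_conv)

lemma K_identity:
  assumes "smf \<sigma>" "perf \<sigma>"
  shows "ext_d (\<lambda>is. prim i (\<sigma> (i # is))) is x = \<sigma> is x - avg i (\<sigma> is) x - prim i (ext_d \<sigma> (i # is)) x"
proof -
  have sm: "\<And>is. smooth_fun (\<sigma> is)" using assms smf_def by blast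
  define \<tau> where "\<tau> = (\<lambda>is. prim i (\<sigma> is))"
  have e: "(\<lambda>is. prim i (\<sigma> (i # is))) = iota i \<tau>" by (simp add: iota_def \<tau>_def)
  have "pd i (\<tau> is) x = prim i (pd i (\<sigma> is)) x"
    unfolding \<tau>_def prim_def by (rule conv_pd[OF cont_primw smooth_C1[OF sm]])
  also have "\<dots> = \<sigma> is x - avg i (\<sigma> is) x"
    by (rule prim_pd[OF smooth_C1[OF sm]]) (use assms(2) perf_def in blast)
  finally have p: "pd i (\<tau> is) x = \<sigma> is x - avg i (\<sigma> is) x" .
  have q: "ext_d \<tau> (i # is) x = prim i (ext_d \<sigma> (i # is)) x"
    unfolding \<tau>_def prim_def by (rule conv_ext_d[OF cont_primw assms(1)])
  show ?thesis unfolding e using cartan[of i \<tau> "is" x] p q by simp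
qed

fun Qf :: "'n list \<Rightarrow> ('n list \<Rightarrow> real^'n \<Rightarrow> real) \<Rightarrow> 'n list \<Rightarrow> real^'n \<Rightarrow> real" where
  "Qf [] \<sigma> = (\<lambda>is x. 0)"
| "Qf (i # L) \<sigma> = (\<lambda>is x. prim i (\<sigma> (i # is)) x + avg i (Qf L \<sigma> is) x)"

fun ALf :: "'n list \<Rightarrow> (real^'n \<Rightarrow> real) \<Rightarrow> real^'n \<Rightarrow> real" where
  "ALf [] g = g"
| "ALf (i # L) g = avg i (ALf L g)"

lemma smf_Qf: "smf \<sigma> \<Longrightarrow> smf (Qf L \<sigma>)"
proof (induction L)
  case Nil then show ?case by (simp add: smf_def smooth_const0)
next
  case (Cons i L)
  then show ?case unfolding smf_def
    by (auto intro!: smooth_add smooth_prim smooth_avg)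
qed

lemma tinv_add: "tinv v f \<Longrightarrow> tinv v g \<Longrightarrow> tinv v (\<lambda>x. f x + g x)"
  unfolding tinv_def by simp

lemma tinv_Qf: "(\<And>is. tinv v (\<sigma> is)) \<Longrightarrow> tinv v (Qf L \<sigma> is)"
proof (induction L arbitrary: "is")
  case Nil then show ?case by (simp add: tinv_def)
next
  case (Cons i L)
  then show ?case by (auto intro!: tinv_add tinv_prim tinv_avg)
qed

lemma smooth_ALf: "smooth_fun g \<Longrightarrow> smooth_fun (ALf L g)"
  by (induction L) (auto intro: smooth_avg)

lemma tinv_ALf: "tinv v g \<Longrightarrow> tinv v (ALf L g)"
  by (induction L) (auto intro: tinv_avg)

lemma Q_identity:
  assumes "smf \<sigma>" "perf \<sigma>" "\<And>is x. ext_d \<sigma> is x = 0"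
  shows "ext_d (Qf L \<sigma>) is x = \<sigma> is x - ALf L (\<sigma> is) x"
proof (induction L arbitrary: "is" x)
  case Nil
  then show ?case by (simp add: ext_d_def)
next
  case (Cons i L)
  have sm: "\<And>is. smooth_fun (\<sigma> is)" using assms smf_def by blast
  have smQ: "\<And>is. smooth_fun (Qf L \<sigma> is)" using smf_Qf[OF assms(1)] smf_def by blast
  have "ext_d (Qf (i # L) \<sigma>) is x =
     ext_d (\<lambda>is. prim i (\<sigma> (i # is))) is x + ext_d (\<lambda>is. avg i (Qf L \<sigma> is)) is x"
    unfolding Qf.simps
    by (rule ext_d_add[where f="\<lambda>is. prim i (\<sigma> (i # is))" and g="\<lambda>is. avg i (Qf L \<sigma> is)"])
       (auto intro!: smooth_diff smooth_prim smooth_avg sm smQ)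
  also have "ext_d (\<lambda>is. avg i (Qf L \<sigma> is)) is x = avg i (ext_d (Qf L \<sigma>) is) x"
    unfolding avg_def by (rule conv_ext_d[OF cont_avgw smf_Qf[OF assms(1)]])
  also have "ext_d (Qf L \<sigma>) is = (\<lambda>y. \<sigma> is y - ALf L (\<sigma> is) y)"
    using Cons.IH by (simp add: fun_eq_iff)
  also have "avg i (\<lambda>y. \<sigma> is y - ALf L (\<sigma> is) y) x = avg i (\<sigma> is) x - avg i (ALf L (\<sigma> is)) x"
    unfolding avg_def by (rule conv_diff2[OF cont_avgw]) (auto intro!: smooth_cont sm smooth_ALf)
  also have "ext_d (\<lambda>is. prim i (\<sigma> (i # is))) is x = \<sigma> is x - avg i (\<sigma> is) x - prim i (ext_d \<sigma> (i # is)) x"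
    by (rule K_identity[OF assms(1,2)])
  also have "ext_d \<sigma> (i # is) = (\<lambda>y. 0)" using assms(3) by (simp add: fun_eq_iff)
  finally show ?case by (simp add: prim_def)
qed

lemma ALf_ext_d:
  assumes "smf \<beta>"
  shows "ALf L (ext_d \<beta> is) x = ext_d (\<lambda>is. ALf L (\<beta> is)) is x"
proof (induction L arbitrary: x)
  case Nil then show ?case by simp
next
  case (Cons i L)
  have sm: "smf (\<lambda>is. ALf L (\<beta> is))" using assms smooth_ALf unfolding smf_def by blast
  have "ALf (i # L) (ext_d \<beta> is) x = avg i (ALf L (ext_d \<beta> is)) x" by simp
  also have "ALf L (ext_d \<beta> is) = ext_d (\<lambda>is. ALf L (\<beta> is)) is" using Cons.IH by (simp add: fun_eq_iff)
  also have "avg i (ext_d (\<lambda>is. ALf L (\<beta> is)) is) x = ext_d (\<lambda>is. avg i (ALf L (\<beta> is))) is x"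
    unfolding avg_def by (rule conv_ext_d[OF cont_avgw sm, symmetric])
  finally show ?case by simp
qed

lemma pd_ALf_zero:
  assumes "smooth_fun g" "\<And>i. tinv ((2*pi) *\<^sub>R axis i 1) g" "j \<in> set L"
  shows "pd j (ALf L g) x = 0"
  using assms(3)
proof (induction L arbitrary: x)
  case Nil then show ?case by simp
next
  case (Cons i L)
  have sm: "smooth_fun (ALf L g)" using assms(1) by (rule smooth_ALf)
  have "pd j (ALf (i # L) g) x = avg i (pd j (ALf L g)) x"
    unfolding ALf.simps avg_def by (rule conv_pd[OF cont_avgw smooth_C1[OF sm]])
  also have "\<dots> = 0"
  proof (cases "j = i")
    case True
    then show ?thesis using avg_pd_zero[OF smooth_C1[OF sm] tinv_ALf[OF assms(2)]] by simp
  next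
    case False
    then have "pd j (ALf L g) = (\<lambda>y. 0)" using Cons by (simp add: fun_eq_iff)
    then show ?thesis by (simp add: avg_def)
  qed
  finally show ?case .
qed

lemma Qf_zero:
  assumes "\<And>is. length is \<noteq> k \<Longrightarrow> \<sigma> is = (\<lambda>x. 0)" "length is \<noteq> k - 1" "1 \<le> k"
  shows "Qf L \<sigma> is = (\<lambda>x. 0)"
proof (induction L)
  case Nil then show ?case by simp
next
  case (Cons i L)
  have "\<sigma> (i # is) = (\<lambda>x. 0)" using assms(2,3) by (intro assms(1)) auto
  then show ?case using Cons by (simp add: prim_def avg_def)
qed

lemma Qf_swap:
  assumes "\<And>is i j. i < j \<and> j < length is \<Longrightarrow> \<sigma> (is[i := is ! j, j := is ! i]) = (\<lambda>x. - \<sigma> is x)"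
    and "i < j" "j < length is"
  shows "Qf L \<sigma> (is[i := is ! j, j := is ! i]) = (\<lambda>x. - Qf L \<sigma> is x)"
proof (induction L)
  case Nil then show ?case by simp
next
  case (Cons l L)
  have e: "l # is[i := is ! j, j := is ! i] = (l # is)[Suc i := (l # is) ! Suc j, Suc j := (l # is) ! Suc i]"
    by simp
  have "\<sigma> (l # is[i := is ! j, j := is ! i]) = (\<lambda>x. - \<sigma> (l # is) x)"
    unfolding e using assms(2,3) by (intro assms(1)) auto
  then show ?case using Cons by (simp add: prim_def avg_def conv_uminus)
qed

lemma primw_bound: "t \<in> cbox 0 (2*pi) \<Longrightarrow> \<bar>t / (2*pi)\<bar> \<le> (1::real)"
proof -
  assume "t \<in> cbox 0 (2*pi)"
  then have t: "0 \<le> t" "t \<le> 2*pi" by (auto simp: cbox_interval)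
  then have "\<bar>t / (2*pi)\<bar> = t / (2*pi)" by simp
  also have "\<dots> \<le> 1" using t by (simp add: pos_divide_le_eq)
  finally show ?thesis .
qed

lemma Qf_bound:
  assumes "smf \<sigma>" "\<And>is y. \<bar>\<sigma> is y\<bar> \<le> B"
  shows "\<bar>Qf L \<sigma> is x\<bar> \<le> real (length L) * (2*pi*B)"
proof (induction L arbitrary: "is" x)
  case Nil
  show ?case by simp
next
  case (Cons i L)
  have sm: "\<And>is. smooth_fun (\<sigma> is)" using assms(1) smf_def by blast
  have smQ: "\<And>is. smooth_fun (Qf L \<sigma> is)" using smf_Qf[OF assms(1)] smf_def by blast
  have b1: "\<bar>prim i (\<sigma> (i # is)) x\<bar> \<le> 2*pi*(1*B)"
    unfolding prim_def
    by (rule conv_bound[OF cont_primw smooth_cont[OF sm]]) (auto intro: primw_bound assms(2))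
  have b2: "\<bar>avg i (Qf L \<sigma> is) x\<bar> \<le> 2*pi*((1/(2*pi)) * (real (length L) * (2*pi*B)))"
    unfolding avg_def
    by (rule conv_bound[OF cont_avgw smooth_cont[OF smQ]]) (auto intro: Cons.IH)
  have "\<bar>Qf (i # L) \<sigma> is x\<bar> \<le> \<bar>prim i (\<sigma> (i # is)) x\<bar> + \<bar>avg i (Qf L \<sigma> is) x\<bar>"
    by (simp add: abs_triangle_ineq)
  also have "\<dots> \<le> 2*pi*B + real (length L) * (2*pi*B)"
  proof -
    have e1: "2*pi*(1*B) = 2*pi*B" by simp
    have e2: "2*pi*((1/(2*pi)) * (real (length L) * (2*pi*B))) = real (length L) * (2*pi*B)"
      by simp
    show ?thesis using b1 b2 unfolding e1 e2 by linarith
  qed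
  also have "\<dots> = real (length (i # L)) * (2*pi*B)" by (simp add: algebra_simps)
  finally show ?case .
qed

theorem lemma5p11:
  fixes V :: "(real^'n) set" and k :: nat and \<delta> :: real
    and \<sigma> :: "real \<Rightarrow> 'n list \<Rightarrow> real^'n \<Rightarrow> real"
  assumes "subtorus_subspace V"
    and "1 \<le> k"
    and "\<And>s. s < 0 \<Longrightarrow> smooth_kform k (\<sigma> s) \<and> exact_kform k (\<sigma> s) \<and> invariant_under V (\<sigma> s)"
    and "\<delta> > 0"
    and "family_bigO \<delta> \<sigma>"
  shows "\<exists>\<gamma>. (\<forall>s<0. smooth_kform (k - 1) (\<gamma> s) \<and> invariant_under V (\<gamma> s)
                  \<and> ext_d (\<gamma> s) = \<sigma> s)
            \<and> family_bigO \<delta> \<gamma>"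
proof -
  obtain L :: "'n list" where L: "set L = UNIV" using finite_list[of "UNIV :: 'n set"] by auto
  obtain C where C: "\<forall>s<0. \<forall>is x. \<bar>\<sigma> s is x\<bar> \<le> C * exp (s * \<delta>)"
    using assms(5) unfolding family_bigO_def by blast
  define \<gamma> where "\<gamma> = (\<lambda>s. Qf L (\<sigma> s))"
  have main: "smooth_kform (k - 1) (\<gamma> s) \<and> invariant_under V (\<gamma> s) \<and> ext_d (\<gamma> s) = \<sigma> s"
    if s: "s < 0" for s
  proof -
    have h: "smooth_kform k (\<sigma> s)" "exact_kform k (\<sigma> s)" "invariant_under V (\<sigma> s)"
      using assms(3)[OF s] by auto
    obtain \<beta> where \<beta>: "smooth_kform (k - 1) \<beta>" "ext_d \<beta> = \<sigma> s"
      using h(2) unfolding exact_kform_def by blast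
    have sms: "smf (\<sigma> s)" and pers: "perf (\<sigma> s)"
      using h(1) unfolding smooth_kform_def smf_def perf_def torus_periodic_tinv by auto
    have smb: "smf \<beta>" and perb: "perf \<beta>"
      using \<beta>(1) unfolding smooth_kform_def smf_def perf_def torus_periodic_tinv by auto
    have ds: "\<And>is x. ext_d (\<sigma> s) is x = 0"
      using dd_zero[OF smb] \<beta>(2) by simp
    have Qid: "ext_d (\<gamma> s) is x = \<sigma> s is x - ALf L (\<sigma> s is) x" for "is" x
      unfolding \<gamma>_def by (rule Q_identity[OF sms pers ds])
    have z: "\<And>is' j y. pd j (ALf L (\<beta> is')) y = 0"
      by (rule pd_ALf_zero) (use smb perb L in \<open>auto simp: smf_def perf_def\<close>)
    have AL0: "ALf L (\<sigma> s is) x = 0" for "is" x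
    proof -
      have "ALf L (\<sigma> s is) x = ALf L (ext_d \<beta> is) x" using \<beta>(2) by simp
      also have "\<dots> = ext_d (\<lambda>is. ALf L (\<beta> is)) is x" by (rule ALf_ext_d[OF smb])
      also have "\<dots> = 0" unfolding ext_d_def by (simp add: z)
      finally show ?thesis .
    qed
    have dg: "ext_d (\<gamma> s) = \<sigma> s" using Qid AL0 by (simp add: fun_eq_iff)
    have sk: "smooth_kform (k - 1) (\<gamma> s)"
      unfolding smooth_kform_def
    proof (intro conjI allI impI)
      fix "is" :: "'n list" assume len: "length is \<noteq> k - 1"
      show "\<gamma> s is = (\<lambda>x. 0)" unfolding \<gamma>_def
        by (intro Qf_zero) (use h(1) assms(2) len in \<open>auto simp: smooth_kform_def\<close>)
    next
      fix "is" :: "'n list" and i j assume ij: "i < j \<and> j < length is"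
      show "\<gamma> s (is[i := is ! j, j := is ! i]) = (\<lambda>x. - \<gamma> s is x)" unfolding \<gamma>_def
        by (intro Qf_swap) (use h(1) ij in \<open>auto simp: smooth_kform_def\<close>)
    next
      fix "is"
      show "smooth_fun (\<gamma> s is)" unfolding \<gamma>_def using smf_Qf[OF sms] smf_def by blast
    next
      fix "is"
      show "torus_periodic (\<gamma> s is)" unfolding \<gamma>_def torus_periodic_tinv
        using pers by (auto intro!: tinv_Qf simp: perf_def)
    qed
    have iv: "invariant_under V (\<gamma> s)"
      unfolding invariant_under_tinv \<gamma>_def
      using h(3) by (auto intro!: tinv_Qf simp: invariant_under_tinv)
    show ?thesis using sk iv dg by blast
  qed
  have bo: "family_bigO \<delta> \<gamma>"
    unfolding family_bigO_def
  proof (intro exI allI impI)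
    fix s :: real and "is" x assume s: "s < 0"
    have sms: "smf (\<sigma> s)"
      using assms(3)[OF s] unfolding smooth_kform_def smf_def by auto
    have "\<bar>\<gamma> s is x\<bar> \<le> real (length L) * (2*pi*(C * exp (s * \<delta>)))"
      unfolding \<gamma>_def by (rule Qf_bound[OF sms]) (use C s in blast)
    then show "\<bar>\<gamma> s is x\<bar> \<le> (real (length L) * (2*pi*C)) * exp (s * \<delta>)"
      by (simp add: algebra_simps)
  qed
  show ?thesis using main bo by blast
qed

end
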